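(* Let $f$ be a nonconstant harmonic function on $K$. Among all junction points $x$ lying on the contour $[p_0,p_1]\cup[p_0,p_2]\cup[p_1,p_2]$ of $G_0$, there is at most one at which the normal derivative of $f$ (with respect to some cell having $x$ as a vertex) vanishes. Moreover, such an exceptional point exists and is a vertex of $G_0$ if and only if the restrictions of $f$ to all three edges of $G_0$ are monotone.
   Context: Let $p_0,p_1,p_2$ be the vertices of a unit equilateral triangle in $\mathbb{R}^2$, $F_i(x)=(x+p_i)/2$, and $K$ the Sierpinski gasket (the attractor of $F_0,F_1,F_2$). For a word $w$ of length $m$, $F_w=F_{w_1}\circ\cdots\circ F_{w_m}$ and $C_w=F_w(K)$ is a cell of level $m$ with vertices $F_w(p_0),F_w(p_1),F_w(p_2)$; the minimal triangles of $G_m$ are the triangles with these vertices. Junction points are the points of $\bigcup_m\bigcup_{|w|=m}\{F_w(p_0),F_w(p_1),F_w(p_2)\}$. A continuous $f:K\to\mathbb{R}$ is harmonic if for every $m\ge0$ and every minimal triangle of $G_m$ with vertices $v_i,v_j,v_k$, the value at the midpoint $v_{ij}$ of $[v_i,v_j]$ is $\frac15(2f(v_i)+2f(v_j)+f(v_k))$. For a harmonic $f$, a junction point $x=F_w(p_i)$ and the cell $C_w$ (with other vertices $y=F_w(p_j)$, $z=F_w(p_k)$), the normal derivative of $f$ at $x$ with respect to $C_w$ is $\partial_n f(x)=(5/3)^{|w|}\big(2f(x)-f(y)-f(z)\big)$ (this value does not change if $C_w$ is replaced by a smaller cell $C_{wi\cdots i}$ having $x$ as a vertex). Monotonicity of restrictions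 to edges refers to a linear parametrization of each edge. *)

theory Defs
  imports "HOL-Analysis.Analysis"
begin

text \<open>Vertices are given by p :: nat \<Rightarrow> complex (only p 0, p 1, p 2 matter).
  Words are lists over {0,1,2}.\<close>

definition sg_F :: "(nat \<Rightarrow> complex) \<Rightarrow> nat \<Rightarrow> complex \<Rightarrow> complex" where
  "sg_F p i x = (x + p i) / 2"

fun sg_Fw :: "(nat \<Rightarrow> complex) \<Rightarrow> nat list \<Rightarrow> complex \<Rightarrow> complex" where
  "sg_Fw p [] = id"
| "sg_Fw p (i # w) = sg_F p i \<circ> sg_Fw p w"

definition sg_word :: "nat list \<Rightarrow> bool" where
  "sg_word w \<longleftrightarrow> set w \<subseteq> {..<3}"

definition sg_junctions :: "(nat \<Rightarrow> complex) \<Rightarrow> complex set" where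
  "sg_junctions p = {sg_Fw p w (p i) | w i. sg_word w \<and> i < 3}"

text \<open>The Sierpinski gasket: the attractor of F_0,F_1,F_2, which is the closure of V_*.\<close>
definition sg_K :: "(nat \<Rightarrow> complex) \<Rightarrow> complex set" where
  "sg_K p = closure (sg_junctions p)"

definition sg_harmonic :: "(nat \<Rightarrow> complex) \<Rightarrow> (complex \<Rightarrow> real) \<Rightarrow> bool" where
  "sg_harmonic p f \<longleftrightarrow> continuous_on (sg_K p) f \<and>
     (\<forall>w i j k. sg_word w \<and> {i, j, k} = {0, 1, 2} \<longrightarrow>
        f (midpoint (sg_Fw p w (p i)) (sg_Fw p w (p j))) =
          (2 * f (sg_Fw p w (p i)) + 2 * f (sg_Fw p w (p j)) + f (sg_Fw p w (p k))) / 5)"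

definition sg_normal_deriv :: "(nat \<Rightarrow> complex) \<Rightarrow> (complex \<Rightarrow> real) \<Rightarrow> nat list \<Rightarrow> nat \<Rightarrow> real" where
  "sg_normal_deriv p f w i =
     (5/3) ^ length w * (2 * f (sg_Fw p w (p i)) -
        (\<Sum>l\<in>{0, 1, 2} - {i}. f (sg_Fw p w (p l))))"

definition sg_contour :: "(nat \<Rightarrow> complex) \<Rightarrow> complex set" where
  "sg_contour p = closed_segment (p 0) (p 1) \<union> closed_segment (p 0) (p 2) \<union> closed_segment (p 1) (p 2)"

definition sg_zero_nd_points :: "(nat \<Rightarrow> complex) \<Rightarrow> (complex \<Rightarrow> real) \<Rightarrow> complex set" where
  "sg_zero_nd_points p f = {x \<in> sg_junctions p \<inter> sg_contour p.
     \<exists>w i. sg_word w \<and> i < 3 \<and> sg_Fw p w (p i) = x \<and> sg_normal_deriv p f w i = 0}"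

definition sg_edge_monotone :: "(nat \<Rightarrow> complex) \<Rightarrow> (complex \<Rightarrow> real) \<Rightarrow> nat \<Rightarrow> nat \<Rightarrow> bool" where
  "sg_edge_monotone p f i j \<longleftrightarrow>
     (let g = (\<lambda>t::real. f (p i + of_real t * (p j - p i))) in
       monotone_on {0..1} (\<le>) (\<le>) g \<or> monotone_on {0..1} (\<le>) (\<ge>) g)"

end

theory Submission
  imports Defs
begin

lemma Fw_append: "sg_Fw p (w @ v) = sg_Fw p w \<circ> sg_Fw p v"
  by (induction w) auto

lemma Fw_snoc: "sg_Fw p (w @ [m]) x = sg_Fw p w (sg_F p m x)"
  by (simp add: Fw_append)

lemma Fw_affine: "sg_Fw p w z = z / 2 ^ length w + sg_Fw p w 0"
proof (induction w arbitrary: z)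
  case Nil then show ?case by simp
next
  case (Cons a w)
  show ?case using Cons[of z] Cons[of 0]
    by (simp add: sg_F_def field_simps)
qed

lemma Fw_line: "sg_Fw p w (a + of_real t * (b - a)) = sg_Fw p w a + of_real t * (sg_Fw p w b - sg_Fw p w a)"
proof -
  obtain c where "\<And>z. sg_Fw p w z = z / 2 ^ length w + c" using Fw_affine by blast
  then show ?thesis by (simp only:, simp add: field_simps)
qed

lemma F_self[simp]: "sg_F p m (p m) = p m"
  by (simp add: sg_F_def)

lemma F_mid: "sg_F p m (p l) = midpoint (p m) (p l)"
  by (simp add: sg_F_def midpoint_def scaleR_conv_of_real field_simps)

lemma Fw_mid: "sg_Fw p w (midpoint a b) = midpoint (sg_Fw p w a) (sg_Fw p w b)"
proof -
  obtain c where "\<And>z. sg_Fw p w z = z / 2 ^ length w + c" using Fw_affine by blast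
  then show ?thesis by (simp only:, simp add: midpoint_def scaleR_conv_of_real field_simps)
qed

lemma Fw_rep_self[simp]: "sg_Fw p (replicate n m) (p m) = p m"
  by (induction n) auto


definition stp :: "nat \<Rightarrow> nat \<Rightarrow> real \<times> real \<Rightarrow> real \<times> real" where
  "stp i m x = (if m = i then (fst x, (snd x - fst x) / 3) else ((fst x - snd x) / 3, snd x))"

definition walk :: "nat \<Rightarrow> real \<times> real \<Rightarrow> nat list \<Rightarrow> real \<times> real" where
  "walk i x w = foldl (\<lambda>x m. stp i m x) x w"

lemma walk_Nil[simp]: "walk i x [] = x" by (simp add: walk_def)
lemma walk_Cons[simp]: "walk i x (m # w) = walk i (stp i m x) w" by (simp add: walk_def)
lemma walk_snoc: "walk i x (w @ [m]) = stp i m (walk i x w)" by (simp add: walk_def)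

definition cne :: "real \<times> real \<Rightarrow> bool" where
  "cne x \<longleftrightarrow> fst x * snd x \<le> 0 \<and> x \<noteq> (0, 0)"

lemma cne_stp: "cne x \<Longrightarrow> cne (stp i m x)"
proof -
  obtain a b where x: "x = (a, b)" by (cases x)
  assume c: "cne x"
  then have ab: "a * b \<le> 0" "(a, b) \<noteq> (0,0)" using x by (auto simp: cne_def)
  have e1: "a * ((b - a) / 3) = (a * b - a * a) / 3" by (simp add: algebra_simps)
  have e2: "((a - b) / 3) * b = (a * b - b * b) / 3" by (simp add: algebra_simps)
  have "a * a \<ge> 0" "b * b \<ge> 0" by auto
  then show ?thesis using ab e1 e2 x unfolding cne_def stp_def
    by (auto intro: order_trans[OF ab(1)])
qed

lemma cne_walk: "cne x \<Longrightarrow> cne (walk i x w)"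
  by (induction w arbitrary: x) (auto simp: cne_stp)

lemma cne_neq: "cne x \<Longrightarrow> fst x \<noteq> snd x"
  unfolding cne_def by (cases x) (auto simp: mult_le_0_iff)

lemma cne_walk_neq: "cne x \<Longrightarrow> fst (walk i x w) \<noteq> snd (walk i x w)"
  using cne_neq cne_walk by blast

lemma stp_nz: "x \<noteq> (0,0) \<Longrightarrow> stp i m x \<noteq> (0,0)"
  unfolding stp_def by (cases x) auto

lemma walk_uniq:
  assumes "x \<noteq> (0,0)" "set v \<subseteq> {i, j}" "set w \<subseteq> {i, j}"
    "fst (walk i x v) = snd (walk i x v)" "fst (walk i x w) = snd (walk i x w)"
  shows "v = w"
  using assms
proof (induction v arbitrary: x w)
  case Nil
  obtain a b where x: "x = (a, b)" by (cases x)
  have ab: "a = b" "a \<noteq> 0" using Nil(1,4) x by auto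
  show ?case
  proof (cases w)
    case (Cons m w')
    have "cne (stp i m x)" using ab x by (auto simp: cne_def stp_def)
    then have "fst (walk i (stp i m x) w') \<noteq> snd (walk i (stp i m x) w')" by (rule cne_walk_neq)
    then show ?thesis using Nil(5) Cons by simp
  qed simp
next
  case (Cons m v)
  obtain a b where x: "x = (a, b)" by (cases x)
  have nc: "\<not> cne (stp i m' x)" if "fst (walk i x (m' # u)) = snd (walk i x (m' # u))" for m' u
    using that cne_walk_neq[of "stp i m' x" i u] by auto
  have c1: "\<not> cne (stp i m x)" using nc Cons.prems(4) by blast
  show ?case
  proof (cases w)
    case Nil
    then have "a = b" "a \<noteq> 0" using Cons.prems(1,5) x by auto
    then have "cne (stp i m x)" using x by (auto simp: cne_def stp_def)
    then show ?thesis using c1 by blast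
  next
    fix m' w' assume Cons2: "w = m' # w'"
    have c2: "\<not> cne (stp i m' x)" using nc Cons.prems(5) Cons2 by blast
    have mm: "m \<in> {i, j}" "m' \<in> {i, j}" using Cons.prems(2,3) Cons2 by auto
    have "m = m'"
    proof (rule ccontr)
      assume "m \<noteq> m'"
      then have "(m = i \<and> m' \<noteq> i) \<or> (m' = i \<and> m \<noteq> i)" using mm by auto
      then have "\<not> cne (a, (b - a)/3) \<and> \<not> cne ((a - b)/3, b)"
        using c1 c2 x unfolding stp_def by auto
      moreover have "(a, b) \<noteq> (0,0)" using Cons.prems(1) x by auto
      ultimately have "a * ((b - a)/3) > 0" "((a - b)/3) * b > 0" unfolding cne_def by auto
      then have "a * (b - a) > 0" "(a - b) * b > 0" by (simp_all add: zero_less_mult_iff)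
      moreover have "a * (b - a) + (a - b) * b = - ((a - b) * (a - b))"
        by algebra
      ultimately show False by (smt (verit) zero_le_square)
    qed
    have "stp i m x \<noteq> (0,0)" using Cons.prems(1) by (rule stp_nz)
    moreover have "set v \<subseteq> {i, j}" "set w' \<subseteq> {i, j}" using Cons.prems(2,3) Cons2 by auto
    moreover have "fst (walk i (stp i m x) v) = snd (walk i (stp i m x) v)" using Cons.prems(4) by simp
    moreover have "fst (walk i (stp i m x) w') = snd (walk i (stp i m x) w')"
      using Cons.prems(5) Cons2 \<open>m = m'\<close> by simp
    ultimately have "v = w'" by (rule Cons.IH)
    then show ?thesis using Cons2 \<open>m = m'\<close> by simp
  qed
qed

lemma walk_pos: "fst x \<le> 0 \<Longrightarrow> 0 \<le> snd x \<Longrightarrow> fst x < snd x \<Longrightarrow>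
   fst (walk i x w) \<le> 0 \<and> 0 \<le> snd (walk i x w) \<and> fst (walk i x w) < snd (walk i x w)"
  by (induction w arbitrary: x) (auto simp: stp_def)

lemma walk_neg: "fst x \<ge> 0 \<Longrightarrow> 0 \<ge> snd x \<Longrightarrow> fst x > snd x \<Longrightarrow>
   fst (walk i x w) \<ge> 0 \<and> 0 \<ge> snd (walk i x w) \<and> fst (walk i x w) > snd (walk i x w)"
  by (induction w arbitrary: x) (auto simp: stp_def)

lemma walk_rep_i: "walk i (a, b) (replicate n i) = (a, - a/2 + (b + a/2) / 3 ^ n)"
  by (induction n arbitrary: b) (auto simp: stp_def field_simps)

lemma walk_rep_j: "j \<noteq> i \<Longrightarrow> walk i (a, b) (replicate n j) = (- b/2 + (a + b/2) / 3 ^ n, b)"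
  by (induction n arbitrary: a) (auto simp: stp_def field_simps)


lemma perm3: "{i, j, k} = {0, 1, 2::nat} \<Longrightarrow> i \<noteq> j \<and> j \<noteq> k \<and> i \<noteq> k \<and> i < 3 \<and> j < 3 \<and> k < 3"
proof -
  assume h: "{i, j, k} = {0, 1, 2::nat}"
  have "card (set [i,j,k]) = length [i,j,k]" using h by simp
  then have "distinct [i,j,k]" by (rule card_distinct)
  moreover have "i \<in> {0,1,2}" "j \<in> {0,1,2}" "k \<in> {0,1,2}" using h by blast+
  ultimately show ?thesis by auto
qed



lemma others: "{i, j, k} = {0, 1, 2::nat} \<Longrightarrow> {0, 1, 2} - {i} = {j, k}"
proof -
  assume h: "{i, j, k} = {0, 1, 2::nat}"
  have d: "i \<noteq> j" "i \<noteq> k" using perm3[OF h] by auto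
  have "{0, 1, 2} - {i} = {i, j, k} - {i}" using h by simp
  also have "\<dots> = {j, k}" using d by blast
  finally show ?thesis .
qed

lemma sum_others: "{i, j, k} = {0, 1, 2::nat} \<Longrightarrow> (\<Sum>l\<in>{0, 1, 2} - {i}. g l) = (g j + g k :: real)"
  using perm3[of i j k] others[of i j k] by simp

lemma word_snoc: "sg_word w \<Longrightarrow> m < 3 \<Longrightarrow> sg_word (w @ [m])"
  by (auto simp: sg_word_def)

lemma harm_rule:
  assumes "sg_harmonic p f" "sg_word w" "{i, j, k} = {0, 1, 2}"
  shows "f (sg_Fw p (w @ [i]) (p j)) =
     (2 * f (sg_Fw p w (p i)) + 2 * f (sg_Fw p w (p j)) + f (sg_Fw p w (p k))) / 5"
proof -
  have "sg_Fw p (w @ [i]) (p j) = midpoint (sg_Fw p w (p i)) (sg_Fw p w (p j))"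
    by (simp add: Fw_snoc F_mid Fw_mid)
  moreover have "\<forall>w i j k. sg_word w \<and> {i, j, k} = {0, 1, 2} \<longrightarrow>
        f (midpoint (sg_Fw p w (p i)) (sg_Fw p w (p j))) =
          (2 * f (sg_Fw p w (p i)) + 2 * f (sg_Fw p w (p j)) + f (sg_Fw p w (p k))) / 5"
    using assms(1) unfolding sg_harmonic_def by blast
  ultimately show ?thesis using assms(2,3) by metis
qed

definition ND where "ND p f w i = sg_normal_deriv p f w i"

lemma ND_eq: "{i, j, k} = {0, 1, 2::nat} \<Longrightarrow>
   sg_normal_deriv p f w i = (5/3) ^ length w * (2 * f (sg_Fw p w (p i)) - f (sg_Fw p w (p j)) - f (sg_Fw p w (p k)))"
  unfolding sg_normal_deriv_def by (subst sum_others[of i j k "\<lambda>l. f (sg_Fw p w (p l))"]) (assumption, simp)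

lemma ND_i:
  assumes "sg_harmonic p f" "sg_word w" "{i, j, k} = {0, 1, 2}"
  shows "sg_normal_deriv p f (w @ [i]) i = sg_normal_deriv p f w i"
proof -
  have ikj: "{i, k, j} = {0, 1, 2::nat}" using assms(3) by (metis insert_commute)
  have e1: "sg_Fw p (w @ [i]) (p i) = sg_Fw p w (p i)" by (simp add: Fw_snoc)
  note h1 = harm_rule[OF assms(1,2,3)] and h2 = harm_rule[OF assms(1,2) ikj]
  define xi where "xi = f (sg_Fw p w (p i))"
  define xj where "xj = f (sg_Fw p w (p j))"
  define xk where "xk = f (sg_Fw p w (p k))"
  have L: "sg_normal_deriv p f (w @ [i]) i = (5/3)^(length w + 1) *
     (2 * xi - (2 * xi + 2 * xj + xk) / 5 - (2 * xi + 2 * xk + xj) / 5)"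
    using ND_eq[OF assms(3), of p f "w @ [i]"] unfolding e1 h1 h2 xi_def xj_def xk_def by simp
  have R: "sg_normal_deriv p f w i = (5/3)^(length w) * (2 * xi - xj - xk)"
    unfolding xi_def xj_def xk_def by (rule ND_eq[OF assms(3)])
  show ?thesis unfolding L R by (simp add: field_simps)
qed

lemma ND_j:
  assumes "sg_harmonic p f" "sg_word w" "{i, j, k} = {0, 1, 2}"
  shows "sg_normal_deriv p f (w @ [i]) j = (sg_normal_deriv p f w j - sg_normal_deriv p f w i) / 3"
proof -
  have ikj: "{i, k, j} = {0, 1, 2::nat}" using assms(3) by (metis insert_commute)
  have jik: "{j, i, k} = {0, 1, 2::nat}" using assms(3) by (metis insert_commute)
  have e1: "sg_Fw p (w @ [i]) (p i) = sg_Fw p w (p i)" by (simp add: Fw_snoc)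
  note h1 = harm_rule[OF assms(1,2,3)] and h2 = harm_rule[OF assms(1,2) ikj]
  define xi where "xi = f (sg_Fw p w (p i))"
  define xj where "xj = f (sg_Fw p w (p j))"
  define xk where "xk = f (sg_Fw p w (p k))"
  have L: "sg_normal_deriv p f (w @ [i]) j = (5/3)^(length w + 1) *
     (2 * ((2 * xi + 2 * xj + xk) / 5) - xi - (2 * xi + 2 * xk + xj) / 5)"
    using ND_eq[OF jik, of p f "w @ [i]"] unfolding e1 h1 h2 xi_def xj_def xk_def by simp
  have R1: "sg_normal_deriv p f w i = (5/3)^(length w) * (2 * xi - xj - xk)"
    unfolding xi_def xj_def xk_def by (rule ND_eq[OF assms(3)])
  have R2: "sg_normal_deriv p f w j = (5/3)^(length w) * (2 * xj - xi - xk)"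
    unfolding xi_def xj_def xk_def by (rule ND_eq[OF jik])
  show ?thesis unfolding L R1 R2 by (simp add: field_simps)
qed

lemma cell_diff:
  assumes "{i, j, k} = {0, 1, 2::nat}"
  shows "f (sg_Fw p w (p j)) - f (sg_Fw p w (p i)) =
     (3/5) ^ length w * (sg_normal_deriv p f w j - sg_normal_deriv p f w i) / 3"
proof -
  have jik: "{j, i, k} = {0, 1, 2::nat}" using assms by (metis insert_commute)
  define xi where "xi = f (sg_Fw p w (p i))"
  define xj where "xj = f (sg_Fw p w (p j))"
  define xk where "xk = f (sg_Fw p w (p k))"
  have R1: "sg_normal_deriv p f w i = (5/3)^(length w) * (2 * xi - xj - xk)"
    unfolding xi_def xj_def xk_def by (rule ND_eq[OF assms])
  have R2: "sg_normal_deriv p f w j = (5/3)^(length w) * (2 * xj - xi - xk)"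
    unfolding xi_def xj_def xk_def by (rule ND_eq[OF jik])
  have P: "(3/5::real) ^ length w * (5/3) ^ length w = 1"
    by (simp add: power_mult_distrib[symmetric])
  have D: "sg_normal_deriv p f w j - sg_normal_deriv p f w i = (5/3)^(length w) * (3 * (xj - xi))"
    unfolding R1 R2 by (simp add: algebra_simps)
  have "(3/5) ^ length w * (sg_normal_deriv p f w j - sg_normal_deriv p f w i) / 3
      = ((3/5::real) ^ length w * (5/3) ^ length w) * (3 * (xj - xi)) / 3"
    unfolding D by (simp only: mult.assoc)
  then show ?thesis unfolding P xi_def xj_def by simp
qed

lemma ND_walk:
  assumes "sg_harmonic p f" "{i, j, k} = {0, 1, 2::nat}" "set w \<subseteq> {i, j}"
  shows "(sg_normal_deriv p f w i, sg_normal_deriv p f w j) =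
         walk i (sg_normal_deriv p f [] i, sg_normal_deriv p f [] j) w"
  using assms(3)
proof (induction w rule: rev_induct)
  case Nil then show ?case by simp
next
  case (snoc m w)
  have jik: "{j, i, k} = {0, 1, 2::nat}" using assms(2) by (metis insert_commute)
  have pr: "i \<noteq> j" "i < 3" "j < 3" using perm3[OF assms(2)] by auto
  have sw: "set w \<subseteq> {i, j}" "m \<in> {i, j}" using snoc.prems by auto
  then have wd: "sg_word w" using pr unfolding sg_word_def by auto
  have IH: "(sg_normal_deriv p f w i, sg_normal_deriv p f w j) =
         walk i (sg_normal_deriv p f [] i, sg_normal_deriv p f [] j) w" using snoc.IH sw by simp
  show ?case
  proof (cases "m = i")
    case True
    then show ?thesis unfolding walk_snoc IH[symmetric] stp_def
      using ND_i[OF assms(1) wd assms(2)] ND_j[OF assms(1) wd assms(2)] by simp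
  next
    case False
    then have "m = j" using sw by auto
    then show ?thesis unfolding walk_snoc IH[symmetric] stp_def
      using ND_i[OF assms(1) wd jik] ND_j[OF assms(1) wd jik] pr by simp
  qed
qed

lemma ND_rep:
  assumes "sg_harmonic p f" "sg_word w" "{i, j, k} = {0, 1, 2::nat}"
  shows "sg_normal_deriv p f (w @ replicate n i) i = sg_normal_deriv p f w i"
proof (induction n)
  case 0 then show ?case by simp
next
  case (Suc n)
  have "i < 3" using perm3[OF assms(3)] by auto
  then have wd: "sg_word (w @ replicate n i)" using assms(2) unfolding sg_word_def by auto
  have "w @ replicate (Suc n) i = (w @ replicate n i) @ [i]"
    by (simp add: replicate_append_same[symmetric])
  then show ?case using ND_i[OF assms(1) wd assms(3)] Suc by simp
qed

lemma ex_perm: "i < 3 \<Longrightarrow> \<exists>j k. {i, j, k} = {0, 1, 2::nat}"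
proof -
  assume "i < 3"
  then have "i = 0 \<or> i = 1 \<or> i = 2" by auto
  then show ?thesis
  proof (elim disjE)
    assume "i = 0" then show ?thesis by blast
  next
    assume "i = 1" then have "{i, 0, 2} = {0, 1, 2::nat}" by auto
    then show ?thesis by blast
  next
    assume "i = 2" then have "{i, 0, 1} = {0, 1, 2::nat}" by auto
    then show ?thesis by blast
  qed
qed

lemma const_junc:
  assumes "sg_harmonic p f" "f (p 0) = c" "f (p 1) = c" "f (p 2) = c"
  shows "sg_word w \<Longrightarrow> l < 3 \<Longrightarrow> f (sg_Fw p w (p l)) = c"
proof (induction w arbitrary: l rule: rev_induct)
  case Nil
  then have "l = 0 \<or> l = 1 \<or> l = 2" by auto
  then show ?case using assms by auto
next
  case (snoc m w)
  have wd: "sg_word w" "m < 3" using snoc.prems unfolding sg_word_def by auto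
  show ?case
  proof (cases "l = m")
    case True
    then show ?thesis using snoc.IH[OF wd(1) snoc.prems(2)] by (simp add: Fw_snoc)
  next
    case False
    define k where "k = 3 - m - l"
    have "{m, l, k} = {0, 1, 2::nat}"
    proof -
      have "m = 0 \<or> m = 1 \<or> m = 2" "l = 0 \<or> l = 1 \<or> l = 2" using wd snoc.prems by auto
      then show ?thesis using False unfolding k_def by (elim disjE) auto
    qed
    moreover have "k < 3" unfolding k_def using False by arith
    ultimately show ?thesis using harm_rule[OF assms(1) wd(1), of m l k]
      snoc.IH[OF wd(1)] wd snoc.prems(2) by simp
  qed
qed


fun bc :: "nat list \<Rightarrow> nat \<Rightarrow> nat \<Rightarrow> real" where
  "bc [] l m = (if m = l then 1 else 0)"
| "bc (c # w) l m = (bc w l m + (if m = c then 1 else 0)) / 2"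

lemma bc_rep:
  "set w \<subseteq> {..<3} \<Longrightarrow> l < 3 \<Longrightarrow>
   sg_Fw p w (p l) = of_real (bc w l 0) * p 0 + of_real (bc w l 1) * p 1 + of_real (bc w l 2) * p 2"
proof (induction w)
  case Nil
  then have "l = 0 \<or> l = 1 \<or> l = 2" by auto
  then show ?case by auto
next
  case (Cons c w)
  then have "c = 0 \<or> c = 1 \<or> c = 2" by auto
  moreover have IH: "sg_Fw p w (p l) = of_real (bc w l 0) * p 0 + of_real (bc w l 1) * p 1 + of_real (bc w l 2) * p 2"
    using Cons by simp
  ultimately show ?case by (elim disjE) (simp_all add: sg_F_def IH field_simps)
qed

lemma bc_sum: "l < 3 \<Longrightarrow> set w \<subseteq> {..<3} \<Longrightarrow> bc w l 0 + bc w l 1 + bc w l 2 = 1"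
proof (induction w)
  case Nil
  then have "l = 0 \<or> l = 1 \<or> l = 2" by auto
  then show ?case by auto
next
  case (Cons c w)
  then have "c = 0 \<or> c = 1 \<or> c = 2" by auto
  moreover have IH: "bc w l 0 + bc w l 1 + bc w l 2 = 1" using Cons by simp
  ultimately show ?case using IH by (elim disjE) (simp_all add: field_simps)
qed

lemma bc_nonneg: "bc w l m \<ge> 0"
  by (induction w) auto

lemma bc_pos: "m \<in> set w \<or> m = l \<Longrightarrow> bc w l m > 0"
proof (induction w)
  case (Cons c w)
  show ?case
  proof (cases "m = c")
    case True
    then show ?thesis using bc_nonneg[of w l m] by simp
  next
    case False
    then show ?thesis using Cons by simp
  qed
qed simp

lemma indep:
  fixes c0 c1 c2 :: real and p :: "nat \<Rightarrow> complex"
  assumes d: "dist (p 0) (p 1) = 1" "dist (p 0) (p 2) = 1" "dist (p 1) (p 2) = 1"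
    and s: "c0 + c1 + c2 = 0"
    and z: "of_real c0 * p 0 + of_real c1 * p 1 + of_real c2 * p 2 = 0"
  shows "c0 = 0 \<and> c1 = 0 \<and> c2 = 0"
proof -
  define z1 where "z1 = p 1 - p 0"
  define z2 where "z2 = p 2 - p 0"
  have n1: "norm z1 = 1" using d(1) unfolding z1_def by (simp add: dist_norm norm_minus_commute)
  have n2: "norm z2 = 1" using d(2) unfolding z2_def by (simp add: dist_norm norm_minus_commute)
  have n3: "norm (z2 - z1) = 1" using d(3) unfolding z1_def z2_def by (simp add: dist_norm norm_minus_commute)
  have c0: "c0 = - c1 - c2" using s by simp
  have lin: "of_real c1 * z1 + of_real c2 * z2 = 0"
    using z unfolding c0 z1_def z2_def by (simp add: algebra_simps)
  have "c2 = 0"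
  proof (rule ccontr)
    assume "c2 \<noteq> 0"
    define r where "r = - c1 / c2"
    have zz: "z2 = of_real r * z1"
    proof -
      have "of_real c2 * z2 = - of_real c1 * z1" using lin by (simp add: eq_neg_iff_add_eq_0 add.commute)
      then have "z2 = (- of_real c1 * z1) / of_real c2" using \<open>c2 \<noteq> 0\<close> by (simp add: field_simps)
      then show ?thesis unfolding r_def by (simp add: field_simps)
    qed
    have "\<bar>r\<bar> = 1" using n2 n1 unfolding zz by (simp add: norm_mult)
    moreover have "z2 - z1 = of_real (r - 1) * z1" unfolding zz by (simp add: algebra_simps)
    then have "norm (z2 - z1) = \<bar>r - 1\<bar> * norm z1" by (simp only: norm_mult norm_of_real)
    then have "\<bar>r - 1\<bar> = 1" using n3 n1 by simp
    ultimately show False by linarith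
  qed
  moreover have "z1 \<noteq> 0" using n1 by auto
  ultimately have "c1 = 0" using lin by simp
  then show ?thesis using \<open>c2 = 0\<close> c0 by simp
qed

lemma bc_unique:
  fixes p :: "nat \<Rightarrow> complex"
  assumes d: "dist (p 0) (p 1) = 1" "dist (p 0) (p 2) = 1" "dist (p 1) (p 2) = 1"
    and w: "set w \<subseteq> {..<3}" "l < 3"
    and e: "e 0 + e 1 + e 2 = 1"
    and eq: "sg_Fw p w (p l) = of_real (e 0) * p 0 + of_real (e 1) * p 1 + of_real (e 2) * p (2::nat)"
  shows "bc w l 0 = e 0 \<and> bc w l 1 = e 1 \<and> bc w l 2 = e 2"
proof -
  have "(bc w l 0 - e 0) + (bc w l 1 - e 1) + (bc w l 2 - e 2) = 0"
    using bc_sum[OF w(2,1)] e by simp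
  moreover have "of_real (bc w l 0 - e 0) * p 0 + of_real (bc w l 1 - e 1) * p 1 + of_real (bc w l 2 - e 2) * p 2 = 0"
    using bc_rep[OF w, of p] eq by (simp add: algebra_simps)
  ultimately have "bc w l 0 - e 0 = 0 \<and> bc w l 1 - e 1 = 0 \<and> bc w l 2 - e 2 = 0"
    by (rule indep[OF d])
  then show ?thesis by simp
qed


lemma perm6: "{i, j, k} = {0, 1, 2::nat} \<Longrightarrow>
  (i,j,k) \<in> {(0,1,2),(0,2,1),(1,0,2),(1,2,0),(2,0,1),(2,1,0)}"
proof -
  assume h: "{i, j, k} = {0, 1, 2::nat}"
  have "card (set [i,j,k]) = length [i,j,k]" using h by simp
  then have "distinct [i,j,k]" by (rule card_distinct)
  moreover have "i \<in> {0,1,2}" "j \<in> {0,1,2}" "k \<in> {0,1,2}" using h by blast+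
  ultimately show ?thesis by auto
qed

lemma seg_class:
  fixes p :: "nat \<Rightarrow> complex"
  assumes d: "dist (p 0) (p 1) = 1" "dist (p 0) (p 2) = 1" "dist (p 1) (p 2) = 1"
    and w: "set w \<subseteq> {..<3}" "l < 3"
    and ijk: "{i, j, k} = {0, 1, 2::nat}"
    and x: "sg_Fw p w (p l) \<in> closed_segment (p i) (p j)"
  shows "k \<notin> set w \<and> l \<noteq> k"
proof -
  obtain u where u: "sg_Fw p w (p l) = (1 - u) *\<^sub>R p i + u *\<^sub>R p j"
    using x unfolding closed_segment_def by blast
  define e where "e m = (if m = i then 1 - u else 0) + (if m = j then u else (0::real))" for m
  have P: "(i,j,k) \<in> {(0,1,2),(0,2,1),(1,0,2),(1,2,0),(2,0,1),(2,1,0)}" by (rule perm6[OF ijk])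
  have es: "e 0 + e 1 + e 2 = 1" using P unfolding e_def by auto
  have er: "sg_Fw p w (p l) = of_real (e 0) * p 0 + of_real (e 1) * p 1 + of_real (e 2) * p 2"
    using P unfolding u e_def scaleR_conv_of_real by (auto simp: algebra_simps)
  have ek: "e k = 0" using P unfolding e_def by auto
  have "bc w l 0 = e 0 \<and> bc w l 1 = e 1 \<and> bc w l 2 = e 2" by (rule bc_unique[OF d w es er])
  then have "bc w l k = 0" using P ek by auto
  then show ?thesis using bc_pos[of k w l] by auto
qed

lemma vert_class:
  fixes p :: "nat \<Rightarrow> complex"
  assumes d: "dist (p 0) (p 1) = 1" "dist (p 0) (p 2) = 1" "dist (p 1) (p 2) = 1"
    and w: "set w \<subseteq> {..<3}" "l < 3" and m: "m < 3"
    and x: "sg_Fw p w (p l) = p m"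
  shows "set w \<subseteq> {m} \<and> l = m"
proof -
  define e where "e k = (if k = m then 1 else (0::real))" for k
  have M: "m = 0 \<or> m = 1 \<or> m = 2" using m by auto
  have es: "e 0 + e 1 + e 2 = 1" using M unfolding e_def by auto
  have er: "sg_Fw p w (p l) = of_real (e 0) * p 0 + of_real (e 1) * p 1 + of_real (e 2) * p 2"
    using M unfolding x e_def by auto
  have "bc w l 0 = e 0 \<and> bc w l 1 = e 1 \<and> bc w l 2 = e 2" by (rule bc_unique[OF d w es er])
  then have z: "bc w l k = 0" if "k < 3" "k \<noteq> m" for k
  proof -
    have "k = 0 \<or> k = 1 \<or> k = 2" using that by auto
    then show ?thesis using that \<open>bc w l 0 = e 0 \<and> bc w l 1 = e 1 \<and> bc w l 2 = e 2\<close>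
      unfolding e_def by (elim disjE) auto
  qed
  have "k \<notin> set w \<and> l \<noteq> k" if "k < 3" "k \<noteq> m" for k
    using z[OF that] bc_pos[of k w l] by auto
  then show ?thesis using w by blast
qed


definition Dy :: "nat \<Rightarrow> real set" where
  "Dy n = {t. 0 \<le> t \<and> t \<le> 1 \<and> (\<exists>k::int. t = of_int k / 2 ^ n)}"

lemma Dy_01: "0 \<in> Dy n" "1 \<in> Dy n"
  unfolding Dy_def by (auto intro!: exI[of _ 0] exI[of _ "2 ^ n"])

lemma Dy_0: "Dy 0 = {0, 1}"
proof -
  have "t \<in> {0,1}" if "0 \<le> t" "t \<le> 1" "t = of_int k" for t :: real and k
  proof -
    have "0 \<le> k" "k \<le> 1" using that by auto
    then have "k = 0 \<or> k = 1" by auto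
    then show ?thesis using that by auto
  qed
  then show ?thesis unfolding Dy_def by (auto intro: exI[of _ 0] exI[of _ 1])
qed

lemma Dy_lo: "s \<in> Dy (Suc n) \<Longrightarrow> s \<le> 1/2 \<Longrightarrow> 2 * s \<in> Dy n"
  unfolding Dy_def by auto

lemma Dy_hi: "s \<in> Dy (Suc n) \<Longrightarrow> s \<ge> 1/2 \<Longrightarrow> 2 * s - 1 \<in> Dy n"
proof -
  assume "s \<in> Dy (Suc n)" "s \<ge> 1/2"
  then obtain k :: int where k: "s = of_int k / 2 ^ Suc n" "s \<le> 1" by (auto simp: Dy_def)
  have "2 * s - 1 = of_int (k - 2 ^ n) / 2 ^ n" unfolding k by (simp add: field_simps)
  moreover have "0 \<le> 2 * s - 1" "2 * s - 1 \<le> 1" using \<open>s \<ge> 1/2\<close> k(2) by auto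
  ultimately show ?thesis unfolding Dy_def by blast
qed

lemma line_half_i:
  "sg_Fw p (w @ [i]) (p i + of_real (2 * s) * (p j - p i)) = sg_Fw p w (p i + of_real s * (p j - p i))"
proof -
  have "sg_F p i (p i + of_real (2 * s) * (p j - p i)) = p i + of_real s * (p j - p i)"
    by (simp add: sg_F_def field_simps)
  then show ?thesis by (simp add: Fw_snoc)
qed

lemma line_half_j:
  "sg_Fw p (w @ [j]) (p i + of_real (2 * s - 1) * (p j - p i)) = sg_Fw p w (p i + of_real s * (p j - p i))"
proof -
  have "sg_F p j (p i + of_real (2 * s - 1) * (p j - p i)) = p i + of_real s * (p j - p i)"
    by (simp add: sg_F_def field_simps)
  then show ?thesis by (simp add: Fw_snoc)
qed

lemma junc_I: "sg_word w \<Longrightarrow> l < 3 \<Longrightarrow> sg_Fw p w (p l) \<in> sg_junctions p"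
  unfolding sg_junctions_def by blast

lemma line_0: "p i + of_real 0 * (p j - p i) = p i" by simp
lemma line_1: "p i + of_real 1 * (p j - p i) = p j" by simp

lemma dy_mono:
  fixes f :: "complex \<Rightarrow> real"
  assumes H: "\<And>w. set w \<subseteq> {i, j} \<Longrightarrow> f (sg_Fw p w (p i)) \<le> f (sg_Fw p w (p j))"
  shows "set w \<subseteq> {i, j} \<Longrightarrow> s \<in> Dy n \<Longrightarrow> t \<in> Dy n \<Longrightarrow> s \<le> t \<Longrightarrow>
    f (sg_Fw p w (p i + of_real s * (p j - p i))) \<le> f (sg_Fw p w (p i + of_real t * (p j - p i)))"
proof (induction n arbitrary: w s t)
  case 0
  then have "s \<in> {0,1}" "t \<in> {0,1}" by (auto simp: Dy_0)
  then show ?case using H[OF 0(1)] 0(4) by auto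
next
  case (Suc n)
  let ?h = "\<lambda>w t. f (sg_Fw p w (p i + of_real t * (p j - p i)))"
  have wi: "set (w @ [i]) \<subseteq> {i, j}" and wj: "set (w @ [j]) \<subseteq> {i, j}" using Suc.prems(1) by auto
  have hi: "?h w s = ?h (w @ [i]) (2 * s)" for s by (simp only: line_half_i)
  have hj: "?h w s = ?h (w @ [j]) (2 * s - 1)" for s by (simp only: line_half_j)
  show ?case
  proof (cases "t \<le> 1/2")
    case True
    then have "s \<le> 1/2" using Suc.prems by linarith
    then show ?thesis unfolding hi[of s] hi[of t]
      using Suc.IH[OF wi Dy_lo[OF Suc.prems(2)] Dy_lo[OF Suc.prems(3) True]] Suc.prems(4) by simp
  next
    case False
    show ?thesis
    proof (cases "s \<ge> 1/2")
      case True
      have "t \<ge> 1/2" using False by simp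
      have "2 * s - 1 \<le> 2 * t - 1" using Suc.prems(4) by simp
      from Suc.IH[OF wj Dy_hi[OF Suc.prems(2) True] Dy_hi[OF Suc.prems(3) \<open>t \<ge> 1/2\<close>] this]
      show ?thesis unfolding hj[of s] hj[of t] .
    next
      case False2: False
      have "?h w s \<le> ?h w (1/2)" unfolding hi[of s] hi[of "1/2"]
        using Suc.IH[OF wi Dy_lo[OF Suc.prems(2)] Dy_01(2)] False2 Suc.prems(2) by (simp add: Dy_def)
      also have "\<dots> \<le> ?h w t" unfolding hj[of t] hj[of "1/2"]
        using Suc.IH[OF wj Dy_01(1) Dy_hi[OF Suc.prems(3)]] False Suc.prems(3) by (simp add: Dy_def)
      finally show ?thesis .
    qed
  qed
qed

lemma dy_junc:
  assumes "i < 3" "j < 3"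
  shows "sg_word w \<Longrightarrow> t \<in> Dy n \<Longrightarrow> sg_Fw p w (p i + of_real t * (p j - p i)) \<in> sg_junctions p"
proof (induction n arbitrary: w t)
  case 0
  then have "t = 0 \<or> t = 1" by (auto simp: Dy_0)
  then show ?case using junc_I[OF 0(1) assms(1)] junc_I[OF 0(1) assms(2)] by auto
next
  case (Suc n)
  have wi: "sg_word (w @ [i])" and wj: "sg_word (w @ [j])" using Suc.prems(1) assms by (auto simp: sg_word_def)
  show ?case
  proof (cases "t \<le> 1/2")
    case True
    then show ?thesis using Suc.IH[OF wi Dy_lo[OF Suc.prems(2) True]] by (simp only: line_half_i)
  next
    case False
    then show ?thesis using Suc.IH[OF wj Dy_hi[OF Suc.prems(2)]] by (simp only: line_half_j)
  qed
qed

definition ap :: "real \<Rightarrow> nat \<Rightarrow> real" where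
  "ap t n = of_int \<lfloor>t * 2 ^ n\<rfloor> / 2 ^ n"

lemma ap_Dy: "0 \<le> t \<Longrightarrow> t \<le> 1 \<Longrightarrow> ap t n \<in> Dy n"
proof -
  assume t: "0 \<le> t" "t \<le> 1"
  have "0 \<le> \<lfloor>t * 2 ^ n\<rfloor>" using t by simp
  moreover have "\<lfloor>t * 2 ^ n\<rfloor> \<le> \<lfloor>(2::real) ^ n\<rfloor>" using t by (intro floor_mono) simp
  then have "of_int \<lfloor>t * 2 ^ n\<rfloor> \<le> (2::real) ^ n"
    by (metis floor_of_nat of_int_of_nat_eq of_int_le_iff of_nat_numeral of_nat_power)
  ultimately show ?thesis unfolding Dy_def ap_def by auto
qed

lemma ap_mono: "s \<le> t \<Longrightarrow> ap s n \<le> ap t n"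
  unfolding ap_def by (intro divide_right_mono) (auto intro: floor_mono)

lemma ap_lim: "(\<lambda>n. ap t n) \<longlonglongrightarrow> t"
proof (rule tendsto_sandwich[of "\<lambda>n. t - (1/2) ^ n" _ _ "\<lambda>n. t"])
  show "\<forall>\<^sub>F n in sequentially. t - (1/2) ^ n \<le> ap t n"
  proof (intro always_eventually allI)
    fix n
    have "(1/2::real) ^ n = 1 / 2 ^ n" by (simp add: power_divide)
    then have "t - (1/2) ^ n = (t * 2 ^ n - 1) / 2 ^ n" by (simp add: field_simps)
    also have "\<dots> \<le> of_int \<lfloor>t * 2 ^ n\<rfloor> / 2 ^ n"
      by (rule divide_right_mono) (linarith, simp)
    finally show "t - (1/2) ^ n \<le> ap t n" unfolding ap_def .
  qed
  show "\<forall>\<^sub>F n in sequentially. ap t n \<le> t"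
  proof (intro always_eventually allI)
    fix n
    have "of_int \<lfloor>t * 2 ^ n\<rfloor> \<le> t * 2 ^ n" by linarith
    then show "ap t n \<le> t" unfolding ap_def by (simp add: field_simps)
  qed
  have "(\<lambda>n. t - (1/2::real) ^ n) \<longlonglongrightarrow> t - 0"
    by (intro tendsto_intros LIMSEQ_realpow_zero) auto
  then show "(\<lambda>n. t - (1/2::real) ^ n) \<longlonglongrightarrow> t" by simp
qed simp


lemma seg_in_K:
  assumes "i < 3" "j < 3" "0 \<le> t" "t \<le> 1"
  shows "p i + of_real t * (p j - p i) \<in> sg_K p"
proof -
  have "\<forall>n. p i + of_real (ap t n) * (p j - p i) \<in> sg_junctions p"
    using dy_junc[OF assms(1,2), of "[]" _ _ p] ap_Dy[OF assms(3,4)] by (simp add: sg_word_def) blast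
  moreover have "(\<lambda>n. p i + of_real (ap t n) * (p j - p i)) \<longlonglongrightarrow> p i + of_real t * (p j - p i)"
    by (intro tendsto_intros ap_lim)
  ultimately show ?thesis unfolding sg_K_def closure_sequential by (intro exI[of _ "\<lambda>n. p i + of_real (ap t n) * (p j - p i)"]) auto
qed

lemma cont_line:
  assumes "continuous_on (sg_K p) f" "i < 3" "j < 3"
  shows "continuous_on {0..1} (\<lambda>t. f (p i + of_real t * (p j - p i)))"
proof (rule continuous_on_compose2[OF assms(1)])
  show "continuous_on {0..1} (\<lambda>t::real. p i + of_real t * (p j - p i))"
    by (intro continuous_intros)
  show "(\<lambda>t. p i + of_real t * (p j - p i)) ` {0..1} \<subseteq> sg_K p"
    using seg_in_K[OF assms(2,3)] by auto
qed

lemma mono_cells: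
  fixes f :: "complex \<Rightarrow> real"
  assumes c: "continuous_on (sg_K p) f" and ij: "i < 3" "j < 3"
    and H: "\<And>w. set w \<subseteq> {i, j} \<Longrightarrow> f (sg_Fw p w (p i)) \<le> f (sg_Fw p w (p j))"
  shows "monotone_on {0..1} (\<le>) (\<le>) (\<lambda>t. f (p i + of_real t * (p j - p i)))"
proof (rule monotone_onI)
  fix s t :: real assume st: "s \<in> {0..1}" "t \<in> {0..1}" "s \<le> t"
  let ?h = "\<lambda>t. f (p i + of_real t * (p j - p i))"
  have hc: "continuous_on {0..1} ?h" by (rule cont_line[OF c ij])
  have l1: "(\<lambda>n. ?h (ap s n)) \<longlonglongrightarrow> ?h s"
    by (rule continuous_on_tendsto_compose[OF hc ap_lim]) (use st ap_Dy in \<open>auto simp: Dy_def\<close>)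
  have l2: "(\<lambda>n. ?h (ap t n)) \<longlonglongrightarrow> ?h t"
    by (rule continuous_on_tendsto_compose[OF hc ap_lim]) (use st ap_Dy in \<open>auto simp: Dy_def\<close>)
  have "?h (ap s n) \<le> ?h (ap t n)" for n
    using dy_mono[OF H, of "[]" "ap s n" n "ap t n"] ap_Dy st ap_mono[OF st(3)] by auto
  then show "?h s \<le> ?h t" using l1 l2 by (intro LIMSEQ_le) auto
qed


lemma harm_cont: "sg_harmonic p f \<Longrightarrow> continuous_on (sg_K p) f"
  unfolding sg_harmonic_def by blast

lemma cells_walk:
  assumes h: "sg_harmonic p f" and ijk: "{i, j, k} = {0, 1, 2::nat}" and w: "set w \<subseteq> {i, j}"
  shows "f (sg_Fw p w (p j)) - f (sg_Fw p w (p i)) =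
    (3/5) ^ length w * (snd (walk i (sg_normal_deriv p f [] i, sg_normal_deriv p f [] j) w)
                       - fst (walk i (sg_normal_deriv p f [] i, sg_normal_deriv p f [] j) w)) / 3"
  using cell_diff[OF ijk, of f p w] ND_walk[OF h ijk w] by (metis fst_conv snd_conv)

lemma edge_mono:
  assumes h: "sg_harmonic p f" and ijk: "{i, j, k} = {0, 1, 2::nat}"
    and ab: "sg_normal_deriv p f [] i * sg_normal_deriv p f [] j \<le> 0"
    and nz: "(sg_normal_deriv p f [] i, sg_normal_deriv p f [] j) \<noteq> (0, 0)"
  shows "sg_edge_monotone p f i j"
proof -
  define a where "a = sg_normal_deriv p f [] i"
  define b where "b = sg_normal_deriv p f [] j"
  have ij: "i < 3" "j < 3" using perm3[OF ijk] by auto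
  have c: "continuous_on (sg_K p) f" by (rule harm_cont[OF h])
  have ab': "a * b \<le> 0" "(a, b) \<noteq> (0,0)" using ab nz unfolding a_def b_def by auto
  have pp: "(3/5::real) ^ n > 0" for n by simp
  consider "a \<le> 0 \<and> 0 \<le> b \<and> a < b" | "a \<ge> 0 \<and> 0 \<ge> b \<and> a > b"
  proof -
    have "a \<noteq> b"
    proof
      assume "a = b"
      then have "a * a \<le> 0" using ab' by simp
      then have "a = 0" by (metis mult_eq_0_iff order_antisym zero_le_square)
      then show False using ab' \<open>a = b\<close> by simp
    qed
    then have "a < b \<or> b < a" by linarith
    then show ?thesis
    proof
      assume lt: "a < b"
      have "\<not> 0 < a" using lt ab'(1) mult_pos_pos[of a b] by linarith
      moreover have "\<not> b < 0" using lt ab'(1) mult_neg_neg[of a b] by linarith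
      ultimately show ?thesis using that(1) lt by linarith
    next
      assume lt: "b < a"
      have "\<not> 0 < b" using lt ab'(1) mult_pos_pos[of a b] by linarith
      moreover have "\<not> a < 0" using lt ab'(1) mult_neg_neg[of a b] by linarith
      ultimately show ?thesis using that(2) lt by linarith
    qed
  qed
  then show ?thesis
  proof cases
    case 1
    have "f (sg_Fw p w (p i)) \<le> f (sg_Fw p w (p j))" if "set w \<subseteq> {i, j}" for w
    proof -
      have "fst (walk i (a, b) w) < snd (walk i (a, b) w)" using walk_pos[of "(a,b)" i w] 1 by simp
      then have "(3/5) ^ length w * (snd (walk i (a, b) w) - fst (walk i (a, b) w)) / 3 > 0"
        by simp
      then show ?thesis using cells_walk[OF h ijk that] unfolding a_def b_def by linarith
    qed
    then show ?thesis unfolding sg_edge_monotone_def Let_def using mono_cells[OF c ij] by blast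
  next
    case 2
    have "(- f) (sg_Fw p w (p i)) \<le> (- f) (sg_Fw p w (p j))" if "set w \<subseteq> {i, j}" for w
    proof -
      have "fst (walk i (a, b) w) > snd (walk i (a, b) w)" using walk_neg[of "(a,b)" i w] 2 by simp
      then have "(3/5) ^ length w * (snd (walk i (a, b) w) - fst (walk i (a, b) w)) / 3 < 0"
        by (simp add: mult_pos_neg)
      then show ?thesis using cells_walk[OF h ijk that] unfolding a_def b_def by simp
    qed
    moreover have "continuous_on (sg_K p) (- f)" using c by (simp add: fun_Compl_def continuous_on_minus)
    ultimately have "monotone_on {0..1} (\<le>) (\<le>) (\<lambda>t. (- f) (p i + of_real t * (p j - p i)))"
      using mono_cells[OF _ ij] by blast
    then have "monotone_on {0..1} (\<le>) (\<ge>) (\<lambda>t. f (p i + of_real t * (p j - p i)))"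
      unfolding monotone_on_def by auto
    then show ?thesis unfolding sg_edge_monotone_def Let_def by blast
  qed
qed


lemma Fw_rep_other: "sg_Fw p (replicate m i) (p j) = p i + of_real (1 / 2 ^ m) * (p j - p i)"
proof -
  obtain c where c: "\<And>z. sg_Fw p (replicate m i) z = z / 2 ^ m + c" using Fw_affine[of p "replicate m i"] unfolding length_replicate by blast
  have "p i = p i / 2 ^ m + c" using c[of "p i"] by simp
  then have "c = p i - p i / 2 ^ m" by (simp add: algebra_simps)
  then show ?thesis unfolding c by (simp add: field_simps)
qed

lemma nm1: "0 \<le> (x::real) \<Longrightarrow> x \<le> y \<Longrightarrow> y \<le> 1 \<Longrightarrow> g y < (g x :: real) \<Longrightarrow> \<not> monotone_on {0..1} (\<le>) (\<le>) g"
proof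
  assume h: "0 \<le> x" "x \<le> y" "y \<le> 1" "g y < g x" "monotone_on {0..1} (\<le>) (\<le>) g"
  then have "g x \<le> g y" by (intro monotone_onD[OF h(5)]) auto
  then show False using h by simp
qed

lemma nm2: "0 \<le> (x::real) \<Longrightarrow> x \<le> y \<Longrightarrow> y \<le> 1 \<Longrightarrow> g x < (g y :: real) \<Longrightarrow> \<not> monotone_on {0..1} (\<le>) (\<ge>) g"
proof
  assume h: "0 \<le> x" "x \<le> y" "y \<le> 1" "g x < g y" "monotone_on {0..1} (\<le>) (\<ge>) g"
  then have "g y \<le> g x" by (intro monotone_onD[OF h(5)]) auto
  then show False using h by simp
qed

lemma edge_nonmono:
  assumes h: "sg_harmonic p f" and ijk: "{i, j, k} = {0, 1, 2::nat}"
    and ab: "sg_normal_deriv p f [] i * sg_normal_deriv p f [] j > 0"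
  shows "\<not> sg_edge_monotone p f i j"
proof -
  define a where "a = sg_normal_deriv p f [] i"
  define b where "b = sg_normal_deriv p f [] j"
  have ij: "i \<noteq> j" using perm3[OF ijk] by auto
  have ab': "a * b > 0" using ab unfolding a_def b_def by simp
  then have anz: "a \<noteq> 0" and bnz: "b \<noteq> 0" by auto
  obtain m :: nat where m: "\<bar>b + a/2\<bar> / \<bar>a\<bar> + \<bar>a + b/2\<bar> / \<bar>b\<bar> < 3 ^ m"
    using real_arch_pow[of 3] by auto
  have m1: "\<bar>b + a/2\<bar> / 3 ^ m < \<bar>a\<bar>"
  proof -
    have "0 \<le> \<bar>a + b/2\<bar> / \<bar>b\<bar>" by simp
    then have "\<bar>b + a/2\<bar> / \<bar>a\<bar> < 3 ^ m" using m by linarith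
    then show ?thesis using anz by (simp add: field_simps)
  qed
  have m2: "\<bar>a + b/2\<bar> / 3 ^ m < \<bar>b\<bar>"
  proof -
    have "0 \<le> \<bar>b + a/2\<bar> / \<bar>a\<bar>" by simp
    then have "\<bar>a + b/2\<bar> / \<bar>b\<bar> < 3 ^ m" using m by linarith
    then show ?thesis using bnz by (simp add: field_simps)
  qed
  have si: "set (replicate m i) \<subseteq> {i, j}" and sj: "set (replicate m j) \<subseteq> {i, j}" by auto
  have wi: "walk i (a, b) (replicate m i) = (a, - a/2 + (b + a/2) / 3 ^ m)" by (rule walk_rep_i)
  have wj: "walk i (a, b) (replicate m j) = (- b/2 + (a + b/2) / 3 ^ m, b)" using ij by (intro walk_rep_j) auto
  have D1: "f (p i + of_real (1 / 2 ^ m) * (p j - p i)) - f (p i) =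
      (3/5) ^ m * ((- a/2 + (b + a/2) / 3 ^ m) - a) / 3"
    using cells_walk[OF h ijk si, folded a_def b_def] unfolding wi Fw_rep_other by simp
  have jik: "{j, i, k} = {0, 1, 2::nat}" using ijk by (metis insert_commute)
  have e2: "sg_Fw p (replicate m j) (p i) = p i + of_real (1 - 1 / 2 ^ m) * (p j - p i)"
    unfolding Fw_rep_other by (simp add: algebra_simps diff_divide_distrib)
  have D2: "f (p j) - f (p i + of_real (1 - 1 / 2 ^ m) * (p j - p i)) =
      (3/5) ^ m * (b - (- b/2 + (a + b/2) / 3 ^ m)) / 3"
    using cells_walk[OF h ijk sj, folded a_def b_def] unfolding wj e2 by simp
  define g where "g = (\<lambda>t::real. f (p i + of_real t * (p j - p i)))"
  have g0: "g 0 = f (p i)" and g1: "g 1 = f (p j)" unfolding g_def by simp_all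
  have t1: "1 / 2 ^ m \<in> {0..(1::real)}" and t2: "1 - 1 / 2 ^ m \<in> {0..(1::real)}" by auto
  have t1': "0 \<le> (1::real) / 2 ^ m" and t2': "1 - 1 / 2 ^ m \<le> (1::real)" by auto
  have pp: "(3/5::real) ^ m > 0" by simp
  have neg: "(3/5::real) ^ m * X / 3 < 0" if "X < 0" for X
    using that by (intro divide_neg_pos mult_pos_neg) auto
  have pos: "(3/5::real) ^ m * X / 3 > 0" if "X > 0" for X
    using that by (intro divide_pos_pos mult_pos_pos) auto
  have q1: "\<bar>(b + a/2) / 3 ^ m\<bar> < \<bar>a\<bar>" using m1 by (simp add: abs_divide)
  have q2: "\<bar>(a + b/2) / 3 ^ m\<bar> < \<bar>b\<bar>" using m2 by (simp add: abs_divide)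
  have r1: "(b + a/2) / 3 ^ m \<le> \<bar>(b + a/2) / 3 ^ m\<bar>" "- \<bar>(b + a/2) / 3 ^ m\<bar> \<le> (b + a/2) / 3 ^ m"
    by linarith+
  have r2: "(a + b/2) / 3 ^ m \<le> \<bar>(a + b/2) / 3 ^ m\<bar>" "- \<bar>(a + b/2) / 3 ^ m\<bar> \<le> (a + b/2) / 3 ^ m"
    by linarith+
  define q1' where "q1' = (b + a/2) / 3 ^ m"
  define q2' where "q2' = (a + b/2) / 3 ^ m"
  note q1 = q1[folded q1'_def] and q2 = q2[folded q2'_def] and r1 = r1[folded q1'_def] and r2 = r2[folded q2'_def]
  note D1 = D1[folded q1'_def] and D2 = D2[folded q2'_def]
  show ?thesis
  proof (cases "a > 0")
    case True
    then have "b > 0" using ab' zero_less_mult_pos by blast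
    have "(- a/2 + q1') - a < 0" using q1 r1 True abs_of_pos[OF True] by linarith
    from neg[OF this] have "g (1 / 2 ^ m) < g 0" using D1 unfolding g_def by simp
    moreover have "b - (- b/2 + q2') > 0" using q2 r2 \<open>b > 0\<close> abs_of_pos[OF \<open>b > 0\<close>] by linarith
    from pos[OF this] have "g 1 > g (1 - 1 / 2 ^ m)" using D2 unfolding g_def by simp
    ultimately show ?thesis unfolding sg_edge_monotone_def Let_def g_def[symmetric]
      using nm1[of 0 "1 / 2 ^ m" g] nm2[of 0 "1 / 2 ^ m" g] nm1[of "1 - 1 / 2 ^ m" 1 g]
        nm2[of "1 - 1 / 2 ^ m" 1 g] t1' t2' by auto
  next
    case False
    then have "a < 0" using anz by simp
    then have "b < 0" using ab' by (metis mult_neg_pos not_less_iff_gr_or_eq mult_eq_0_iff)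
    have "(- a/2 + q1') - a > 0" using q1 r1 \<open>a < 0\<close> abs_of_neg[OF \<open>a < 0\<close>] by linarith
    from pos[OF this] have "g (1 / 2 ^ m) > g 0" using D1 unfolding g_def by simp
    moreover have "b - (- b/2 + q2') < 0" using q2 r2 \<open>b < 0\<close> abs_of_neg[OF \<open>b < 0\<close>] by linarith
    from neg[OF this] have "g 1 < g (1 - 1 / 2 ^ m)" using D2 unfolding g_def by simp
    ultimately show ?thesis unfolding sg_edge_monotone_def Let_def g_def[symmetric]
      using nm1[of 0 "1 / 2 ^ m" g] nm2[of 0 "1 / 2 ^ m" g] nm1[of "1 - 1 / 2 ^ m" 1 g]
        nm2[of "1 - 1 / 2 ^ m" 1 g] t1' t2' by auto
  qed
qed


lemma AR1:
  fixes d0 d1 d2 :: real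
  assumes "d0 + d1 + d2 = 0"
  shows "(d0 = 0 \<or> d1 = 0 \<or> d2 = 0) \<longleftrightarrow> (d0 * d1 \<le> 0 \<and> d0 * d2 \<le> 0 \<and> d1 * d2 \<le> 0)"
proof
  assume "d0 = 0 \<or> d1 = 0 \<or> d2 = 0"
  then show "d0 * d1 \<le> 0 \<and> d0 * d2 \<le> 0 \<and> d1 * d2 \<le> 0"
  proof (elim disjE)
    assume "d0 = 0" then have "d2 = - d1" using assms by simp
    then show ?thesis using \<open>d0 = 0\<close> by simp
  next
    assume "d1 = 0" then have "d2 = - d0" using assms by simp
    then show ?thesis using \<open>d1 = 0\<close> by simp
  next
    assume "d2 = 0" then have "d1 = - d0" using assms by simp
    then show ?thesis using \<open>d2 = 0\<close> by simp
  qed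
next
  assume h: "d0 * d1 \<le> 0 \<and> d0 * d2 \<le> 0 \<and> d1 * d2 \<le> 0"
  show "d0 = 0 \<or> d1 = 0 \<or> d2 = 0"
  proof (rule ccontr)
    assume "\<not> ?thesis"
    then have nz: "d0 \<noteq> 0" "d1 \<noteq> 0" "d2 \<noteq> 0" by auto
    have "d1 * d2 > 0"
    proof (cases "d0 > 0")
      case True
      then have "d1 < 0" "d2 < 0" using h nz by (auto simp: mult_le_0_iff)
      then show ?thesis by (simp add: mult_neg_neg)
    next
      case False
      then have "d0 < 0" using nz by simp
      then have "d1 > 0" "d2 > 0" using h nz by (auto simp: mult_le_0_iff)
      then show ?thesis by simp
    qed
    then show False using h by simp
  qed
qed

lemma AR2:
  fixes d0 d1 d2 :: real
  assumes "d0 + d1 + d2 = 0"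
  shows "\<not> (d0 * d1 > 0 \<and> d0 * d2 > 0)" "\<not> (d0 * d1 > 0 \<and> d1 * d2 > 0)" "\<not> (d0 * d2 > 0 \<and> d1 * d2 > 0)"
proof -
  have k: "\<not> (a * b > 0 \<and> a * c > 0)" if "a + b + c = 0" for a b c :: real
  proof
    assume h: "a * b > 0 \<and> a * c > 0"
    then have "a * (b + c) > 0" by (simp add: distrib_left)
    moreover have "b + c = - a" using that by simp
    ultimately show False by simp
  qed
  show "\<not> (d0 * d1 > 0 \<and> d0 * d2 > 0)" using k[of d0 d1 d2] assms by simp
  show "\<not> (d0 * d1 > 0 \<and> d1 * d2 > 0)" using k[of d1 d0 d2] assms by (simp add: mult.commute add.commute add.left_commute)
  show "\<not> (d0 * d2 > 0 \<and> d1 * d2 > 0)" using k[of d2 d0 d1] assms by (simp add: mult.commute add.commute add.left_commute)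
qed

lemma decomp: "set w \<subseteq> {l, l'} \<Longrightarrow> (\<exists>n. w = replicate n l) \<or> (\<exists>v n. w = v @ [l'] @ replicate n l)"
proof (induction w rule: rev_induct)
  case Nil then show ?case by (auto intro: exI[of _ 0])
next
  case (snoc m w)
  then have m: "m = l \<or> m = l'" and IH: "(\<exists>n. w = replicate n l) \<or> (\<exists>v n. w = v @ [l'] @ replicate n l)" by auto
  show ?case
  proof (cases "m = l")
    case True
    from IH show ?thesis
    proof
      assume "\<exists>n. w = replicate n l"
      then obtain n where "w = replicate n l" by blast
      then have "w @ [m] = replicate (Suc n) l" using True by (simp add: replicate_append_same)
      then show ?thesis by blast
    next
      assume "\<exists>v n. w = v @ [l'] @ replicate n l"
      then obtain v n where "w = v @ [l'] @ replicate n l" by blast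
      then have "w @ [m] = v @ [l'] @ replicate (Suc n) l" using True by (simp add: replicate_append_same)
      then show ?thesis by blast
    qed
  next
    case False
    then have "w @ [m] = w @ [l'] @ replicate 0 l" using m by simp
    then show ?thesis by blast
  qed
qed


lemma zero_class:
  fixes p :: "nat \<Rightarrow> complex" and f :: "complex \<Rightarrow> real"
  assumes d: "dist (p 0) (p 1) = 1" "dist (p 0) (p 2) = 1" "dist (p 1) (p 2) = 1"
    and h: "sg_harmonic p f"
    and x: "x \<in> sg_zero_nd_points p f"
  shows "(\<exists>l<3. x = p l \<and> sg_normal_deriv p f [] l = 0) \<or>
    (\<exists>i j k v. (i, j, k::nat) \<in> {(0,1,2),(0,2,1),(1,2,0)} \<and> set v \<subseteq> {i, j} \<and>
       x = sg_Fw p v (sg_F p i (p j)) \<and>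
       fst (walk i (sg_normal_deriv p f [] i, sg_normal_deriv p f [] j) v) =
       snd (walk i (sg_normal_deriv p f [] i, sg_normal_deriv p f [] j) v))"
proof -
  obtain w l where w: "sg_word w" "l < 3" "sg_Fw p w (p l) = x" "sg_normal_deriv p f w l = 0"
    and xc: "x \<in> sg_contour p"
    using x unfolding sg_zero_nd_points_def by blast
  have w3: "set w \<subseteq> {..<3}" using w(1) unfolding sg_word_def .
  obtain i j k where ijk: "(i, j, k::nat) \<in> {(0,1,2),(0,2,1),(1,2,0)}" and xs: "x \<in> closed_segment (p i) (p j)"
    using xc unfolding sg_contour_def by blast
  have P: "{i, j, k} = {0, 1, 2::nat}" using ijk by auto
  have "k \<notin> set w \<and> l \<noteq> k" using seg_class[OF d w3 w(2) P] xs w(3) by simp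
  moreover have "i < 3" "j < 3" "k < 3" "i \<noteq> j" "i \<noteq> k" "j \<noteq> k" using perm3[OF P] by auto
  moreover have all3: "m = i \<or> m = j \<or> m = k" if "m < 3" for m
  proof -
    have "m \<in> {0, 1, 2::nat}" using that by auto
    then have "m \<in> {i, j, k}" using P by simp
    then show ?thesis by simp
  qed
  ultimately have sw: "set w \<subseteq> {i, j}" and li: "l = i \<or> l = j"
  proof -
    show "set w \<subseteq> {i, j}"
    proof
      fix m assume "m \<in> set w"
      then have "m < 3" "m \<noteq> k" using w3 \<open>k \<notin> set w \<and> l \<noteq> k\<close> by auto
      then show "m \<in> {i, j}" using all3 by blast
    qed
    show "l = i \<or> l = j" using all3[OF w(2)] \<open>k \<notin> set w \<and> l \<noteq> k\<close> by blast
  qed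
  define l' where "l' = (if l = i then j else i)"
  have ll: "{l', l} = {i, j}" using li unfolding l'_def by auto
  have P2: "{l', l, k} = {0, 1, 2::nat}"
  proof -
    have "{l', l, k} = {l', l} \<union> {k}" by auto
    also have "\<dots> = {i, j} \<union> {k}" unfolding ll ..
    also have "\<dots> = {i, j, k}" by auto
    finally show ?thesis using P by simp
  qed
  have Pl: "{l, l', k} = {0, 1, 2::nat}"
  proof -
    have "{l, l', k} = {l', l} \<union> {k}" by auto
    also have "\<dots> = {i, j} \<union> {k}" unfolding ll ..
    also have "\<dots> = {i, j, k}" by auto
    finally show ?thesis using P by simp
  qed
  have sw2: "set w \<subseteq> {l, l'}" using sw li unfolding l'_def by auto
  from decomp[OF sw2] show ?thesis
  proof
    assume "\<exists>n. w = replicate n l"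
    then obtain n where n: "w = replicate n l" by blast
    have "sg_word []" by (simp add: sg_word_def)
    then have "sg_normal_deriv p f w l = sg_normal_deriv p f [] l"
      using ND_rep[OF h _ Pl, of "[]" n] n by simp
    moreover have "x = p l" using w(3) n by simp
    ultimately show ?thesis using w(2,4) by auto
  next
    assume "\<exists>v n. w = v @ [l'] @ replicate n l"
    then obtain v n where vn: "w = v @ [l'] @ replicate n l" by blast
    have sv: "set v \<subseteq> {i, j}" using sw vn by auto
    have vw: "sg_word v" using w(1) vn unfolding sg_word_def by auto
    have vw': "sg_word (v @ [l'])" using w(1) vn unfolding sg_word_def by auto
    have "sg_normal_deriv p f w l = sg_normal_deriv p f (v @ [l']) l"
      using ND_rep[OF h vw' Pl, of n] vn by simp
    also have "\<dots> = (sg_normal_deriv p f v l - sg_normal_deriv p f v l') / 3"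
      by (rule ND_j[OF h vw P2])
    finally have eq: "sg_normal_deriv p f v l = sg_normal_deriv p f v l'" using w(4) by simp
    then have eqij: "sg_normal_deriv p f v i = sg_normal_deriv p f v j"
      using li unfolding l'_def by (auto split: if_splits)
    have "(sg_normal_deriv p f v i, sg_normal_deriv p f v j) =
         walk i (sg_normal_deriv p f [] i, sg_normal_deriv p f [] j) v"
      by (rule ND_walk[OF h P sv])
    then have wz: "fst (walk i (sg_normal_deriv p f [] i, sg_normal_deriv p f [] j) v) =
       snd (walk i (sg_normal_deriv p f [] i, sg_normal_deriv p f [] j) v)"
      using eqij by (metis fst_conv snd_conv)
    have "x = sg_Fw p v (sg_F p l' (p l))"
      using w(3) vn by (simp add: Fw_append)
    also have "sg_F p l' (p l) = sg_F p i (p j)"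
      using li unfolding l'_def sg_F_def by (auto simp: add.commute)
    finally have "x = sg_Fw p v (sg_F p i (p j))" .
    then show ?thesis using ijk sv wz by blast
  qed
qed


lemma less3: "m < (3::nat) \<Longrightarrow> m = 0 \<or> m = 1 \<or> m = 2" by auto

theorem theorem5:
  fixes p :: "nat \<Rightarrow> complex" and f :: "complex \<Rightarrow> real"
  assumes "dist (p 0) (p 1) = 1" and "dist (p 0) (p 2) = 1" and "dist (p 1) (p 2) = 1"
    and "sg_harmonic p f"
    and "\<not> (\<exists>c. \<forall>x\<in>sg_K p. f x = c)"
  shows "(\<forall>x y. x \<in> sg_zero_nd_points p f \<and> y \<in> sg_zero_nd_points p f \<longrightarrow> x = y) \<and>
         ((\<exists>x\<in>sg_zero_nd_points p f. x \<in> {p 0, p 1, p 2}) \<longleftrightarrow>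
            sg_edge_monotone p f 0 1 \<and> sg_edge_monotone p f 0 2 \<and> sg_edge_monotone p f 1 2)"
proof -
  note d = assms(1,2,3) and h = assms(4)
  define D where "D l = sg_normal_deriv p f [] l" for l
  have P012: "{0, 1, 2::nat} = {0, 1, 2}" by simp
  have P021: "{0, 2, 1::nat} = {0, 1, 2}" by auto
  have P102: "{1, 0, 2::nat} = {0, 1, 2}" by auto
  have P120: "{1, 2, 0::nat} = {0, 1, 2}" by auto
  have P201: "{2, 0, 1::nat} = {0, 1, 2}" by auto
  have D0: "D 0 = 2 * f (p 0) - f (p 1) - f (p 2)" unfolding D_def ND_eq[OF P012] by simp
  have D1: "D 1 = 2 * f (p 1) - f (p 0) - f (p 2)" unfolding D_def ND_eq[OF P102] by simp
  have D2: "D 2 = 2 * f (p 2) - f (p 0) - f (p 1)" unfolding D_def ND_eq[OF P201] by simp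
  have S: "D 0 + D 1 + D 2 = 0" unfolding D0 D1 D2 by simp
  have NZ: "\<not> (D 0 = 0 \<and> D 1 = 0 \<and> D 2 = 0)"
  proof
    assume z: "D 0 = 0 \<and> D 1 = 0 \<and> D 2 = 0"
    then have e: "f (p 1) = f (p 0)" "f (p 2) = f (p 0)" unfolding D0 D1 D2 by linarith+
    have "f y = f (p 0)" if "y \<in> sg_junctions p" for y
      using that const_junc[OF h refl e(1) e(2)] unfolding sg_junctions_def by blast
    then have "\<forall>x\<in>sg_K p. f x = f (p 0)"
      unfolding sg_K_def using continuous_constant_on_closure[OF harm_cont[OF h, unfolded sg_K_def]] by blast
    then show False using assms(5) by blast
  qed
  have NZ01: "(D 0, D 1) \<noteq> (0, 0)" and NZ02: "(D 0, D 2) \<noteq> (0, 0)" and NZ12: "(D 1, D 2) \<noteq> (0, 0)"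
    using NZ S by auto
  note cl = zero_class[OF d h, folded D_def]
  have intpos: "D i * D j > 0"
    if "(i, j, k::nat) \<in> {(0,1,2),(0,2,1),(1,2,0)}"
       "fst (walk i (D i, D j) v) = snd (walk i (D i, D j) v)" for i j k v
  proof -
    have "(D i, D j) \<noteq> (0, 0)" using that(1) NZ01 NZ02 NZ12 by auto
    moreover have "\<not> cne (D i, D j)" using that(2) cne_walk_neq by blast
    ultimately have "\<not> D i * D j \<le> 0" unfolding cne_def by simp
    then show ?thesis by simp
  qed
  have part1: "\<forall>x y. x \<in> sg_zero_nd_points p f \<and> y \<in> sg_zero_nd_points p f \<longrightarrow> x = y"
  proof (intro allI impI, elim conjE)
    fix x y assume x: "x \<in> sg_zero_nd_points p f" and y: "y \<in> sg_zero_nd_points p f"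
    from cl[OF x] show "x = y"
    proof
      assume "\<exists>l<3. x = p l \<and> D l = 0"
      then obtain l where l: "l < 3" "x = p l" "D l = 0" by blast
      have "D 0 = 0 \<or> D 1 = 0 \<or> D 2 = 0" using less3[OF l(1)] l(3) by auto
      then have AR: "D 0 * D 1 \<le> 0 \<and> D 0 * D 2 \<le> 0 \<and> D 1 * D 2 \<le> 0"
        using AR1[OF S] by blast
      from cl[OF y] show "x = y"
      proof
        assume "\<exists>l<3. y = p l \<and> D l = 0"
        then obtain l' where l': "l' < 3" "y = p l'" "D l' = 0" by blast
        have "l = l'"
        proof (rule ccontr)
          assume "l \<noteq> l'"
          then have "D 0 = 0 \<and> D 1 = 0 \<and> D 2 = 0" using less3[OF l(1)] less3[OF l'(1)] l(3) l'(3) S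
            by auto
          then show False using NZ by blast
        qed
        then show ?thesis using l l' by simp
      next
        assume "\<exists>i j k v. (i, j, k::nat) \<in> {(0,1,2),(0,2,1),(1,2,0)} \<and> set v \<subseteq> {i, j} \<and>
           y = sg_Fw p v (sg_F p i (p j)) \<and> fst (walk i (D i, D j) v) = snd (walk i (D i, D j) v)"
        then obtain i j k v where t: "(i, j, k::nat) \<in> {(0,1,2),(0,2,1),(1,2,0)}" "set v \<subseteq> {i, j}"
           "y = sg_Fw p v (sg_F p i (p j))" "fst (walk i (D i, D j) v) = snd (walk i (D i, D j) v)" by blast
        have pos: "D i * D j > 0" by (rule intpos[OF t(1,4)])
        have "(i, j) = (0, 1) \<or> (i, j) = (0, 2) \<or> (i, j) = (1, 2)" using t(1) by auto
        then have False using AR pos by (elim disjE) auto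
        then show ?thesis ..
      qed
    next
      assume "\<exists>i j k v. (i, j, k::nat) \<in> {(0,1,2),(0,2,1),(1,2,0)} \<and> set v \<subseteq> {i, j} \<and>
           x = sg_Fw p v (sg_F p i (p j)) \<and> fst (walk i (D i, D j) v) = snd (walk i (D i, D j) v)"
      then obtain i j k v where ix: "(i, j, k::nat) \<in> {(0,1,2),(0,2,1),(1,2,0)}" "set v \<subseteq> {i, j}"
           "x = sg_Fw p v (sg_F p i (p j))" "fst (walk i (D i, D j) v) = snd (walk i (D i, D j) v)" by blast
      have pi: "D i * D j > 0" by (rule intpos[OF ix(1,4)])
      from cl[OF y] show "x = y"
      proof
        assume "\<exists>l<3. y = p l \<and> D l = 0"
        then obtain l where l: "l < 3" "D l = 0" by blast
        have "D 0 = 0 \<or> D 1 = 0 \<or> D 2 = 0" using less3[OF l(1)] l(2) by auto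
        then have AR: "D 0 * D 1 \<le> 0 \<and> D 0 * D 2 \<le> 0 \<and> D 1 * D 2 \<le> 0"
          using AR1[OF S] by blast
        have "(i, j) = (0, 1) \<or> (i, j) = (0, 2) \<or> (i, j) = (1, 2)" using ix(1) by auto
        then show ?thesis using AR pi by (elim disjE) auto
      next
        assume "\<exists>i j k v. (i, j, k::nat) \<in> {(0,1,2),(0,2,1),(1,2,0)} \<and> set v \<subseteq> {i, j} \<and>
           y = sg_Fw p v (sg_F p i (p j)) \<and> fst (walk i (D i, D j) v) = snd (walk i (D i, D j) v)"
        then obtain i' j' k' v' where iy: "(i', j', k'::nat) \<in> {(0,1,2),(0,2,1),(1,2,0)}" "set v' \<subseteq> {i', j'}"
           "y = sg_Fw p v' (sg_F p i' (p j'))" "fst (walk i' (D i', D j') v') = snd (walk i' (D i', D j') v')"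
          by blast
        have pi': "D i' * D j' > 0" by (rule intpos[OF iy(1,4)])
        have same: "i' = i \<and> j' = j"
          using ix(1) iy(1) pi pi' AR2[OF S] by auto
        have nz: "(D i, D j) \<noteq> (0, 0)" using pi by auto
        have "v = v'" using walk_uniq[OF nz ix(2) _ ix(4)] iy(2,4) same by blast
        then show ?thesis using ix(3) iy(3) same by simp
      qed
    qed
  qed
  have mono_iff: "sg_edge_monotone p f i j \<longleftrightarrow> D i * D j \<le> 0"
    if "(i, j, k::nat) \<in> {(0,1,2),(0,2,1),(1,2,0)}" for i j k
  proof -
    have P: "{i, j, k} = {0, 1, 2::nat}" using that by auto
    have nz: "(D i, D j) \<noteq> (0, 0)" using that NZ01 NZ02 NZ12 by auto
    show ?thesis using edge_mono[OF h P _ nz[unfolded D_def]] edge_nonmono[OF h P]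
      unfolding D_def by force
  qed
  have M: "(sg_edge_monotone p f 0 1 \<and> sg_edge_monotone p f 0 2 \<and> sg_edge_monotone p f 1 2) \<longleftrightarrow>
      (D 0 * D 1 \<le> 0 \<and> D 0 * D 2 \<le> 0 \<and> D 1 * D 2 \<le> 0)"
    using mono_iff[of 0 1 2] mono_iff[of 0 2 1] mono_iff[of 1 2 0] by simp
  have part2: "(\<exists>x\<in>sg_zero_nd_points p f. x \<in> {p 0, p 1, p 2}) \<longleftrightarrow> (D 0 = 0 \<or> D 1 = 0 \<or> D 2 = 0)"
  proof
    assume "\<exists>x\<in>sg_zero_nd_points p f. x \<in> {p 0, p 1, p 2}"
    then obtain x m where x: "x \<in> sg_zero_nd_points p f" "x = p m" "m < 3" by auto
    obtain w l where w: "sg_word w" "l < 3" "sg_Fw p w (p l) = x" "sg_normal_deriv p f w l = 0"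
      using x(1) unfolding sg_zero_nd_points_def by blast
    have "set w \<subseteq> {m} \<and> l = m"
      using vert_class[OF d _ w(2) x(3)] w(1,3) x(2) unfolding sg_word_def by blast
    then have wm: "w = replicate (length w) m" "l = m"
      by (auto intro: replicate_length_same[symmetric])
    obtain j k where jk: "{m, j, k} = {0, 1, 2::nat}" using ex_perm[OF x(3)] by blast
    have "sg_word []" by (simp add: sg_word_def)
    then have "sg_normal_deriv p f w l = D m"
      using ND_rep[OF h _ jk, of "[]" "length w"] wm unfolding D_def by simp
    then have "D m = 0" using w(4) by simp
    then show "D 0 = 0 \<or> D 1 = 0 \<or> D 2 = 0" using x(3) by (metis less3)
  next
    assume "D 0 = 0 \<or> D 1 = 0 \<or> D 2 = 0"
    moreover have "(0::nat) < 3" "(1::nat) < 3" "(2::nat) < 3" by simp_all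
    ultimately obtain m where m: "m < 3" "D m = 0" by blast
    have "p m \<in> sg_junctions p" using junc_I[of "[]" m p] m by (simp add: sg_word_def)
    moreover have "p m \<in> sg_contour p"
      using m(1) unfolding sg_contour_def by (metis less3 UnI1 UnI2 ends_in_segment)
    moreover have "sg_word []" "sg_Fw p [] (p m) = p m" by (simp_all add: sg_word_def)
    moreover have nd: "sg_normal_deriv p f [] m = 0" using m(2) unfolding D_def .
    ultimately have "p m \<in> sg_zero_nd_points p f"
      unfolding sg_zero_nd_points_def using m(1) by blast
    then show "\<exists>x\<in>sg_zero_nd_points p f. x \<in> {p 0, p 1, p 2}" using m(1) by (metis less3 insertCI)
  qed
  have "(\<exists>x\<in>sg_zero_nd_points p f. x \<in> {p 0, p 1, p 2}) \<longleftrightarrow>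
            sg_edge_monotone p f 0 1 \<and> sg_edge_monotone p f 0 2 \<and> sg_edge_monotone p f 1 2"
    unfolding part2 M using AR1[OF S] .
  with part1 show ?thesis by (rule conjI)
qed

end
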